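(* Consider a played level $h$ (i.e. $p_h=1$) of the algorithm SSE described in the context, and let $X(t_h)\in\{u(t_h),\gamma(t_h)\}$ denote the arm pulled at time step $t_h$. At each time step $t_h\in\{3,\dots,T_h\}$, $$X(t_h)=u(t_h)\implies L_{h,u(t_h)}(t_h-1)\le L_{h,\gamma(t_h)}(t_h-1),$$ $$X(t_h)=\gamma(t_h)\implies U_{h,u(t_h)}(t_h-1)\le U_{h,\gamma(t_h)}(t_h-1),$$ and if $X(t_h)=(h,i)$ then $G_{h,\gamma(t_h)}(t_h)\le 2D_{h,i}(t_h-1)$.
   Context: Algorithm SSE (single played level $h$). A finite set $\mathcal{S}_h$ of arms $(h,i)$ is in contention; pulling an arm yields a real reward. Time $t_h$ counts pulls at this level; $X(s)$ is the arm pulled at time $s$ and $y(s)$ its reward; $N_{h,i}(t)$ = number of pulls of $(h,i)$ among the first $t$; $\hat f_{h,i}(t)$ = empirical mean of its rewards; $\hat\nu^2_{h,i}(t)=\frac{1}{N_{h,i}(t)}\sum_{s\le t}(y(s)-\hat f_{h,i}(s))^2\mathbb{1}\{X(s)=(h,i)\}$. With constants $B,C\ge1$, $\delta\in(0,1)$, a positive integer $N_H$, and $\epsilon_h\ge 0$: $\beta(t,\delta)=\log(15N_Ht^4/(4\delta))$; $D_{h,i}(t)=\sqrt{4B\hat\nu^2_{h,i}(t)\beta(t,\delta)/N_{h,i}(t)}+2\sqrt{2BC}\beta(t,\delta)/(N_{h,i}(t)-1)$; $U_{h,i}(t)=\hat f_{h,i}(t)+D_{h,i}(t)$; $L_{h,i}(t)=\hat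 f_{h,i}(t)-D_{h,i}(t)$; $G_{h,i}(t)=\max_{j\ne i,(h,j)\in\mathcal{S}_h}U_{h,j}(t-1)-L_{h,i}(t-1)$; $\gamma(t)=\arg\min_{(h,i)\in\mathcal{S}_h}G_{h,i}(t)$; $u(t)=\arg\max_{(h,i)\in\mathcal{S}_h,i\ne\gamma(t)}U_{h,i}(t-1)$. The game first pulls every arm of $\mathcal{S}_h$ twice; then, while $G_{h,\gamma(t_h)}(t_h)\ge\epsilon_h$, it pulls $X(t_h)=\arg\max_{i\in\{\gamma(t_h),u(t_h)\}}D_{h,i}(t_h-1)$ and increments $t_h$; $T_h$ is the first time with $G_{h,\gamma(T_h)}(T_h)<\epsilon_h$. *)

theory Defs
  imports Complex_Main
begin

text \<open>Model of algorithm SSE at one played level h. Arms of the level are elements of a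
finite set S of type 'a (the level index h is implicit). Time s = 1,2,... counts pulls
at this level; X s is the arm pulled at time s and y s its reward.\<close>

definition npulls :: "(nat \<Rightarrow> 'a) \<Rightarrow> 'a \<Rightarrow> nat \<Rightarrow> nat" where
  "npulls X i t = card {s \<in> {1..t}. X s = i}"

definition fhat :: "(nat \<Rightarrow> 'a) \<Rightarrow> (nat \<Rightarrow> real) \<Rightarrow> 'a \<Rightarrow> nat \<Rightarrow> real" where
  "fhat X y i t = (\<Sum>s\<in>{s \<in> {1..t}. X s = i}. y s) / real (npulls X i t)"

definition nuhat :: "(nat \<Rightarrow> 'a) \<Rightarrow> (nat \<Rightarrow> real) \<Rightarrow> 'a \<Rightarrow> nat \<Rightarrow> real" where
  "nuhat X y i t =
     (\<Sum>s\<in>{s \<in> {1..t}. X s = i}. (y s - fhat X y i s)^2) / real (npulls X i t)"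

definition beta :: "nat \<Rightarrow> real \<Rightarrow> nat \<Rightarrow> real" where
  "beta NH \<delta> t = ln (15 * real NH * real t ^ 4 / (4 * \<delta>))"

definition Dconf :: "real \<Rightarrow> real \<Rightarrow> real \<Rightarrow> nat \<Rightarrow> (nat \<Rightarrow> 'a) \<Rightarrow> (nat \<Rightarrow> real)
    \<Rightarrow> 'a \<Rightarrow> nat \<Rightarrow> real" where
  "Dconf B C \<delta> NH X y i t =
     sqrt (4 * B * nuhat X y i t * beta NH \<delta> t / real (npulls X i t))
     + 2 * sqrt (2 * B * C) * beta NH \<delta> t / (real (npulls X i t) - 1)"

definition Ucb :: "real \<Rightarrow> real \<Rightarrow> real \<Rightarrow> nat \<Rightarrow> (nat \<Rightarrow> 'a) \<Rightarrow> (nat \<Rightarrow> real)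
    \<Rightarrow> 'a \<Rightarrow> nat \<Rightarrow> real" where
  "Ucb B C \<delta> NH X y i t = fhat X y i t + Dconf B C \<delta> NH X y i t"

definition Lcb :: "real \<Rightarrow> real \<Rightarrow> real \<Rightarrow> nat \<Rightarrow> (nat \<Rightarrow> 'a) \<Rightarrow> (nat \<Rightarrow> real)
    \<Rightarrow> 'a \<Rightarrow> nat \<Rightarrow> real" where
  "Lcb B C \<delta> NH X y i t = fhat X y i t - Dconf B C \<delta> NH X y i t"

definition Gap :: "'a set \<Rightarrow> real \<Rightarrow> real \<Rightarrow> real \<Rightarrow> nat \<Rightarrow> (nat \<Rightarrow> 'a) \<Rightarrow> (nat \<Rightarrow> real)
    \<Rightarrow> 'a \<Rightarrow> nat \<Rightarrow> real" where
  "Gap S B C \<delta> NH X y i t =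
     Max ((\<lambda>j. Ucb B C \<delta> NH X y j (t - 1)) ` (S - {i})) - Lcb B C \<delta> NH X y i (t - 1)"

text \<open>A run of SSE at a played level, up to its stopping time T. The tie-breaking rules of
the argmin/argmax are arbitrary: gam and u are any functions with the argmin/argmax
property.\<close>
definition sse_run :: "'a set \<Rightarrow> real \<Rightarrow> real \<Rightarrow> real \<Rightarrow> nat \<Rightarrow> real \<Rightarrow> (nat \<Rightarrow> 'a)
    \<Rightarrow> (nat \<Rightarrow> real) \<Rightarrow> (nat \<Rightarrow> 'a) \<Rightarrow> (nat \<Rightarrow> 'a) \<Rightarrow> nat \<Rightarrow> bool" where
  "sse_run S B C \<delta> NH \<epsilon> X y gam u T \<longleftrightarrow>
     (let K = card S;
          D = (\<lambda>i t. Dconf B C \<delta> NH X y i t);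
          U = (\<lambda>i t. Ucb B C \<delta> NH X y i t);
          G = (\<lambda>i t. Gap S B C \<delta> NH X y i t)
      in
     \<comment> \<open>initialisation: the first 2K pulls pull every arm exactly twice\<close>
     (\<forall>s \<in> {1..2*K}. X s \<in> S) \<and> (\<forall>i \<in> S. npulls X i (2*K) = 2) \<and>
     \<comment> \<open>gam t is an argmin of G(., t) over S\<close>
     (\<forall>t > 2*K. gam t \<in> S \<and> (\<forall>j \<in> S. G (gam t) t \<le> G j t)) \<and>
     \<comment> \<open>u t is an argmax of U(., t-1) over S minus gam t\<close>
     (\<forall>t > 2*K. u t \<in> S - {gam t} \<and> (\<forall>j \<in> S - {gam t}. U j (t - 1) \<le> U (u t) (t - 1))) \<and>
     \<comment> \<open>stopping time T: the first time after initialisation with G < eps\<close>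
     2*K < T \<and> G (gam T) T < \<epsilon> \<and> (\<forall>t. 2*K < t \<and> t < T \<longrightarrow> \<epsilon> \<le> G (gam t) t) \<and>
     \<comment> \<open>selection rule: X t is an argmax of D(., t-1) over {gam t, u t}\<close>
     (\<forall>t. 2*K < t \<and> t \<le> T \<longrightarrow>
        X t \<in> {gam t, u t} \<and> D (gam t) (t - 1) \<le> D (X t) (t - 1)
                           \<and> D (u t) (t - 1) \<le> D (X t) (t - 1)))"

end

theory Submission
  imports Defs
begin

lemma key:
  fixes U L f D :: "'a \<Rightarrow> real"
  assumes fin: "finite S" and g: "g \<in> S" and v: "v \<in> S - {g}"
    and vmax: "\<forall>j\<in>S - {g}. U j \<le> U v"
    and Ue: "\<And>j. U j = f j + D j" and Le: "\<And>j. L j = f j - D j"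
    and Gmin: "Max (U ` (S - {g})) - L g \<le> Max (U ` (S - {v})) - L v"
    and x: "x \<in> {g, v}" and Dg: "D g \<le> D x" and Dv: "D v \<le> D x"
  shows "(x = v \<longrightarrow> L v \<le> L g) \<and> (x = g \<longrightarrow> U v \<le> U g) \<and>
         Max (U ` (S - {g})) - L g \<le> 2 * D x"
proof -
  have M1: "Max (U ` (S - {g})) = U v"
    using fin v vmax by (intro Max_eqI) auto
  have M2: "Max (U ` (S - {v})) \<le> max (U g) (U v)"
  proof -
    have ne: "U ` (S - {v}) \<noteq> {}" using g v by auto
    have "\<forall>a\<in>U ` (S - {v}). a \<le> max (U g) (U v)"
    proof
      fix a assume "a \<in> U ` (S - {v})"
      then obtain j where j: "j \<in> S - {v}" "a = U j" by auto
      show "a \<le> max (U g) (U v)"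
      proof (cases "j = g")
        case True then show ?thesis using j by simp
      next
        case False then have "U j \<le> U v" using vmax j by auto
        then show ?thesis using j by simp
      qed
    qed
    then show ?thesis using fin ne by (simp add: Max_le_iff)
  qed
  have vg: "v \<noteq> g" using v by auto
  have A: "x = v \<longrightarrow> L v \<le> L g"
  proof
    assume xv: "x = v"
    show "L v \<le> L g"
    proof (cases "U v \<ge> U g")
      case True
      then show ?thesis using Gmin M1 M2 by (simp add: max_def split: if_splits)
    next
      case False
      then have "U v - L g \<le> U g - L v" using Gmin M1 M2 by (simp add: max_def)
      moreover have "D g \<le> D v" using Dg xv by simp
      ultimately show ?thesis using Ue[of v] Ue[of g] Le[of v] Le[of g] by linarith
    qed
  qed
  have B: "x = g \<longrightarrow> U v \<le> U g"
  proof
    assume xg: "x = g"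
    show "U v \<le> U g"
    proof (rule ccontr)
      assume "\<not> U v \<le> U g"
      then have "U v - L g \<le> U v - L v" using Gmin M1 M2 by (simp add: max_def)
      moreover have "D v \<le> D g" using Dv xg by simp
      ultimately show False using \<open>\<not> U v \<le> U g\<close> Ue[of v] Ue[of g] Le[of v] Le[of g] by linarith
    qed
  qed
  have C: "Max (U ` (S - {g})) - L g \<le> 2 * D x"
    using x A B M1 Ue[of v] Ue[of g] Le[of v] Le[of g] by auto
  show ?thesis using A B C by blast
qed

theorem lemma3:
  fixes S :: "'a set" and B C \<delta> \<epsilon> :: real and NH :: nat
    and X :: "nat \<Rightarrow> 'a" and y :: "nat \<Rightarrow> real" and gam u :: "nat \<Rightarrow> 'a" and T :: nat
  assumes "finite S" and "card S \<ge> 2"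
    and "B \<ge> 1" and "C \<ge> 1" and "0 < \<delta>" and "\<delta> < 1" and "NH > 0" and "\<epsilon> \<ge> 0"
    and "sse_run S B C \<delta> NH \<epsilon> X y gam u T"
  shows "\<forall>t. 2 * card S < t \<and> t \<le> T \<longrightarrow>
     (X t = u t \<longrightarrow> Lcb B C \<delta> NH X y (u t) (t - 1) \<le> Lcb B C \<delta> NH X y (gam t) (t - 1)) \<and>
     (X t = gam t \<longrightarrow> Ucb B C \<delta> NH X y (u t) (t - 1) \<le> Ucb B C \<delta> NH X y (gam t) (t - 1)) \<and>
     Gap S B C \<delta> NH X y (gam t) t \<le> 2 * Dconf B C \<delta> NH X y (X t) (t - 1)"
proof (intro allI impI)
  fix t assume t: "2 * card S < t \<and> t \<le> T"
  let ?U = "\<lambda>j. Ucb B C \<delta> NH X y j (t - 1)"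
  let ?L = "\<lambda>j. Lcb B C \<delta> NH X y j (t - 1)"
  let ?f = "\<lambda>j. fhat X y j (t - 1)"
  let ?D = "\<lambda>j. Dconf B C \<delta> NH X y j (t - 1)"
  have run: "sse_run S B C \<delta> NH \<epsilon> X y gam u T" by fact
  have g: "gam t \<in> S" and gmin: "\<forall>j\<in>S. Gap S B C \<delta> NH X y (gam t) t \<le> Gap S B C \<delta> NH X y j t"
    and v: "u t \<in> S - {gam t}" and vmax: "\<forall>j\<in>S - {gam t}. ?U j \<le> ?U (u t)"
    and x: "X t \<in> {gam t, u t}" and Dg: "?D (gam t) \<le> ?D (X t)" and Dv: "?D (u t) \<le> ?D (X t)"
    using run t unfolding sse_run_def Let_def by auto
  have Gmin: "Max (?U ` (S - {gam t})) - ?L (gam t) \<le> Max (?U ` (S - {u t})) - ?L (u t)"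
    using gmin v unfolding Gap_def by auto
  have "(X t = u t \<longrightarrow> ?L (u t) \<le> ?L (gam t)) \<and> (X t = gam t \<longrightarrow> ?U (u t) \<le> ?U (gam t)) \<and>
         Max (?U ` (S - {gam t})) - ?L (gam t) \<le> 2 * ?D (X t)"
    by (rule key[where f = ?f, OF assms(1) g v vmax _ _ Gmin x Dg Dv])
       (simp_all add: Ucb_def Lcb_def)
  then show "(X t = u t \<longrightarrow> ?L (u t) \<le> ?L (gam t)) \<and> (X t = gam t \<longrightarrow> ?U (u t) \<le> ?U (gam t)) \<and>
         Gap S B C \<delta> NH X y (gam t) t \<le> 2 * ?D (X t)"
    unfolding Gap_def by simp
qed

end
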